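(* There is no function $f:\mathbb{N}\to\mathbb{N}$ such that $\operatorname{bw}(u(D))\le f(\operatorname{dbw}(D))$ for every digraph $D$.
   Context: $u(D)$ denotes the underlying undirected (multi)graph of $D$, with one undirected edge $xy$ for each directed edge $\vec{xy}$. The branch-width $\operatorname{bw}(G)$ of an undirected (multi)graph $G$ is the minimum width of a branch decomposition $(T,\tau)$, where $T$ is a tree of maximum degree at most three, $\tau$ a bijection from the leaves of $T$ onto $E(G)$, the order of an edge $t$ of $T$ is the number of vertices incident both with an edge in $\tau(Y)$ and an edge in $E(G)\setminus\tau(Y)$ ($Y$ the leaves on one side of $T-t$), and the width is the maximum order (0 if none). Directed branch-width: for $X\subseteq E(D)$, $S^V_X=\{y: \exists x,z,\ \vec{xy}\in E(D)\setminus X,\ \vec{yz}\in X\}$, $f_D(X)=|S^V_X\cup S^V_{E(D)\setminus X}|$; $\operatorname{dbw}(D)$ is defined like branch-width but with the order of a tree edge equal to $f_D(\beta(Y))$ for a bijection $\beta$ from leaves onto $E(D)$. *)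

theory Defs
  imports Main "Graph_Theory.Digraph"
begin

record ('v,'e) umultigraph =
  uverts :: "'v set"
  uedges :: "'e set"
  ends   :: "'e \<Rightarrow> 'v set"

definition underlying :: "('v,'e) pre_digraph \<Rightarrow> ('v,'e) umultigraph" where
  "underlying D = \<lparr> uverts = verts D, uedges = arcs D,
                    ends = (\<lambda>e. {tail D e, head D e}) \<rparr>"

definition tadj :: "nat set set \<Rightarrow> nat \<Rightarrow> nat \<Rightarrow> bool" where
  "tadj TE a b \<longleftrightarrow> {a, b} \<in> TE"

definition tconnected_in :: "nat set set \<Rightarrow> nat \<Rightarrow> nat \<Rightarrow> bool" where
  "tconnected_in TE a b \<longleftrightarrow> (tadj TE)\<^sup>*\<^sup>* a b"

definition is_tree :: "nat set \<Rightarrow> nat set set \<Rightarrow> bool" where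
  "is_tree N TE \<longleftrightarrow>
     finite N \<and> N \<noteq> {} \<and>
     (\<forall>t\<in>TE. card t = 2 \<and> t \<subseteq> N) \<and>
     (\<forall>a\<in>N. \<forall>b\<in>N. tconnected_in TE a b) \<and>
     \<comment> \<open>acyclic: no edge lies on a cycle, i.e. its ends are disconnected after deleting it\<close>
     (\<forall>a b. {a, b} \<in> TE \<longrightarrow> \<not> tconnected_in (TE - {{a, b}}) a b)"

definition tdegree :: "nat set set \<Rightarrow> nat \<Rightarrow> nat" where
  "tdegree TE v = card {t \<in> TE. v \<in> t}"

definition tleaves :: "nat set \<Rightarrow> nat set set \<Rightarrow> nat set" where
  "tleaves N TE = {v \<in> N. tdegree TE v \<le> 1}"

definition side_leaves :: "nat set \<Rightarrow> nat set set \<Rightarrow> nat \<Rightarrow> nat \<Rightarrow> nat set" where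
  "side_leaves N TE a b = {l \<in> tleaves N TE. tconnected_in (TE - {{a, b}}) a l}"

definition is_decomp :: "'e set \<Rightarrow> nat set \<Rightarrow> nat set set \<Rightarrow> (nat \<Rightarrow> 'e) \<Rightarrow> bool" where
  "is_decomp E N TE \<tau> \<longleftrightarrow>
     is_tree N TE \<and> (\<forall>v\<in>N. tdegree TE v \<le> 3) \<and> bij_betw \<tau> (tleaves N TE) E"

definition decomp_width :: "('e set \<Rightarrow> nat) \<Rightarrow> nat set \<Rightarrow> nat set set \<Rightarrow> (nat \<Rightarrow> 'e) \<Rightarrow> nat" where
  "decomp_width ord N TE \<tau> =
     Max ({0} \<union> {ord (\<tau> ` side_leaves N TE a b) | a b. {a, b} \<in> TE})"

text \<open>Minimum width over all decompositions (0 if there is none, e.g. no edges).\<close>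
definition min_width :: "'e set \<Rightarrow> ('e set \<Rightarrow> nat) \<Rightarrow> nat" where
  "min_width E ord =
     (if \<exists>N TE \<tau>. is_decomp E N TE \<tau>
      then (LEAST k. \<exists>N TE \<tau>. is_decomp E N TE \<tau> \<and> decomp_width ord N TE \<tau> = k)
      else 0)"

definition mid_order :: "('v,'e) umultigraph \<Rightarrow> 'e set \<Rightarrow> nat" where
  "mid_order G X = card {v. (\<exists>e\<in>X. v \<in> ends G e) \<and> (\<exists>e\<in>uedges G - X. v \<in> ends G e)}"

definition bw :: "('v,'e) umultigraph \<Rightarrow> nat" where
  "bw G = min_width (uedges G) (mid_order G)"

definition SV :: "('v,'e) pre_digraph \<Rightarrow> 'e set \<Rightarrow> 'v set" where
  "SV D X = {y. (\<exists>e\<in>arcs D - X. head D e = y) \<and> (\<exists>e\<in>X. tail D e = y)}"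

definition fD :: "('v,'e) pre_digraph \<Rightarrow> 'e set \<Rightarrow> nat" where
  "fD D X = card (SV D X \<union> SV D (arcs D - X))"

definition dbw :: "('v,'e) pre_digraph \<Rightarrow> nat" where
  "dbw D = min_width (arcs D) (fD D)"

end

theory Submission
  imports Defs
begin

lemma tadj_sym: "tadj E a b = tadj E b a"
  unfolding tadj_def by (simp add: insert_commute)

lemma tc_sym: "tconnected_in E a b \<Longrightarrow> tconnected_in E b a"
  unfolding tconnected_in_def
  by (induction rule: rtranclp_induct) (auto intro: converse_rtranclp_into_rtranclp tadj_sym[THEN iffD1])

lemma tc_step: "tconnected_in E a b \<Longrightarrow> {b,c} \<in> E \<Longrightarrow> tconnected_in E a c"
  unfolding tconnected_in_def tadj_def by (rule rtranclp.rtrancl_into_rtrancl)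

lemma tc_refl: "tconnected_in E a a"
  unfolding tconnected_in_def by simp

lemma tc_induct[consumes 1, case_names refl step]:
  assumes "tconnected_in E a z" "P a"
    "\<And>z w. tconnected_in E a z \<Longrightarrow> {z,w} \<in> E \<Longrightarrow> P z \<Longrightarrow> P w"
  shows "P z"
  using assms(1) unfolding tconnected_in_def
  by (induction rule: rtranclp_induct) (auto intro: assms(2,3) simp: tconnected_in_def tadj_def)

lemma tree_edge_card: "is_tree N TE \<Longrightarrow> t \<in> TE \<Longrightarrow> card t = 2 \<and> t \<subseteq> N"
  unfolding is_tree_def by blast

lemma tree_edge_neq: "is_tree N TE \<Longrightarrow> {a,b} \<in> TE \<Longrightarrow> a \<noteq> b"
  using tree_edge_card by fastforce

lemma tree_acyc: "is_tree N TE \<Longrightarrow> {a,b} \<in> TE \<Longrightarrow> \<not> tconnected_in (TE - {{a,b}}) a b"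
  unfolding is_tree_def by blast

lemma doubleton_same: "a \<noteq> b \<Longrightarrow> {a,b} = {c,d} \<Longrightarrow> (c = a \<and> d = b) \<or> (c = b \<and> d = a)"
  by (auto simp: doubleton_eq_iff)

lemma cover:
  assumes T: "is_tree N TE" and e: "{a,b} \<in> TE" and v: "v \<in> N"
  shows "tconnected_in (TE - {{a,b}}) a v \<or> tconnected_in (TE - {{a,b}}) b v"
proof -
  have aN: "a \<in> N" using tree_edge_card[OF T e] by auto
  have "tconnected_in TE a v" using T aN v unfolding is_tree_def by blast
  then show ?thesis
  proof (induction rule: tc_induct)
    case refl then show ?case by (simp add: tc_refl)
  next
    case (step z w)
    show ?case
    proof (cases "{z,w} = {a,b}")
      case True
      then have "w = a \<or> w = b" by (auto simp: doubleton_eq_iff)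
      then show ?thesis by (auto simp: tc_refl)
    next
      case False
      then have "{z,w} \<in> TE - {{a,b}}" using step by auto
      then show ?thesis using step.IH tc_step by blast
    qed
  qed
qed

lemma incl:
  assumes T: "is_tree N TE" and xy: "{x,y} \<in> TE" and xc: "{x,c} \<in> TE" and cy: "c \<noteq> y"
    and z: "tconnected_in (TE - {{c,x}}) c z"
  shows "tconnected_in (TE - {{x,y}}) x z"
proof -
  have cx: "{c,x} \<in> TE" using xc by (simp add: insert_commute)
  have ac: "\<not> tconnected_in (TE - {{c,x}}) c x" using tree_acyc[OF T cx] .
  have xne: "x \<noteq> c" using tree_edge_neq[OF T xc] .
  from z show ?thesis
  proof (induction rule: tc_induct)
    case refl
    have "{x,c} \<noteq> {x,y}" using cy xne by (simp add: doubleton_eq_iff)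
    then have "{x,c} \<in> TE - {{x,y}}" using xc by simp
    then show ?case by (rule tc_step[OF tc_refl])
  next
    case (step z w)
    show ?case
    proof (cases "{z,w} = {x,y}")
      case True
      then have zw: "z = x \<or> w = x" by (auto simp add: doubleton_eq_iff)
      have cw: "tconnected_in (TE - {{c,x}}) c w" by (rule tc_step[OF step.hyps(1,2)])
      have False using zw cw step.hyps(1) ac by auto
      then show ?thesis ..
    next
      case False
      then have "{z,w} \<in> TE - {{x,y}}" using step.hyps(2) by simp
      then show ?thesis by (rule tc_step[OF step.IH])
    qed
  qed
qed

lemma side_cover:
  assumes T: "is_tree N TE" and xy: "{x,y} \<in> TE"
    and z: "tconnected_in (TE - {{x,y}}) x z"
  shows "z = x \<or> (\<exists>c. {x,c} \<in> TE \<and> c \<noteq> y \<and> tconnected_in (TE - {{c,x}}) c z)"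
  using z
proof (induction rule: tc_induct)
  case refl then show ?case by simp
next
  case (step z w)
  from step.IH show ?case
  proof
    assume zx: "z = x"
    have "{x,w} \<in> TE" using step.hyps(2) zx by simp
    moreover have "w \<noteq> y" using step.hyps(2) zx by auto
    ultimately have "{x,w} \<in> TE \<and> w \<noteq> y \<and> tconnected_in (TE - {{w,x}}) w w"
      by (simp add: tc_refl)
    then show ?thesis by blast
  next
    assume "\<exists>c. {x,c} \<in> TE \<and> c \<noteq> y \<and> tconnected_in (TE - {{c,x}}) c z"
    then obtain c where c: "{x,c} \<in> TE" "c \<noteq> y" "tconnected_in (TE - {{c,x}}) c z" by blast
    show ?thesis
    proof (cases "{z,w} = {c,x}")
      case True
      then have "w = c \<or> w = x" by (auto simp: doubleton_eq_iff)
      then show ?thesis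
      proof
        assume "w = c"
        then have "{x,c} \<in> TE \<and> c \<noteq> y \<and> tconnected_in (TE - {{c,x}}) c w"
          using c by (simp add: tc_refl)
        then show ?thesis by blast
      qed simp
    next
      case False
      then have "{z,w} \<in> TE - {{c,x}}" using step.hyps(2) by simp
      then have "tconnected_in (TE - {{c,x}}) c w" by (rule tc_step[OF c(3)])
      then show ?thesis using c(1,2) by blast
    qed
  qed
qed

lemma tree_fin: "is_tree N TE \<Longrightarrow> finite N" unfolding is_tree_def by blast
lemma tree_TE_fin: "is_tree N TE \<Longrightarrow> finite TE"
proof -
  assume T: "is_tree N TE"
  have "TE \<subseteq> Pow N" using tree_edge_card[OF T] by auto
  then show ?thesis using tree_fin[OF T] finite_subset by blast
qed

lemma tc_empty: "tconnected_in {} a b \<Longrightarrow> a = b"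
  unfolding tconnected_in_def tadj_def
  by (induction rule: rtranclp_induct) auto

lemma nbr_card:
  assumes T: "is_tree N TE" and deg: "tdegree TE x \<le> 3" and xy: "{x,y} \<in> TE"
  shows "card {c. {x,c} \<in> TE \<and> c \<noteq> y} \<le> 2"
proof -
  let ?C = "{c. {x,c} \<in> TE \<and> c \<noteq> y}"
  let ?g = "\<lambda>c. {x,c}"
  have inj: "inj_on ?g ?C"
  proof
    fix c c' assume c: "c \<in> ?C" and c': "c' \<in> ?C" and eq: "{x,c} = {x,c'}"
    have "x \<noteq> c" "x \<noteq> c'" using tree_edge_neq[OF T] c c' by auto
    then show "c = c'" using eq by (auto simp: doubleton_eq_iff)
  qed
  have sub: "?g ` ?C \<subseteq> {t \<in> TE. x \<in> t} - {{x,y}}"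
    using tree_edge_neq[OF T] by (auto simp: doubleton_eq_iff)
  have fin: "finite {t \<in> TE. x \<in> t}" using tree_TE_fin[OF T] by auto
  have "card ?C = card (?g ` ?C)" using card_image[OF inj] by simp
  also have "\<dots> \<le> card ({t \<in> TE. x \<in> t} - {{x,y}})" using card_mono[OF _ sub] fin by blast
  also have "\<dots> = card {t \<in> TE. x \<in> t} - 1" using xy by (simp add: card_Diff_singleton)
  also have "\<dots> \<le> 2" using deg unfolding tdegree_def by simp
  finally show ?thesis .
qed

definition sd :: "nat set \<Rightarrow> nat set set \<Rightarrow> nat \<Rightarrow> nat \<Rightarrow> nat set" where
  "sd N TE a b = {v \<in> N. tconnected_in (TE - {{a,b}}) a v}"

lemma balanced:
  assumes D: "is_decomp E N TE \<tau>" and fE: "finite E" and m: "card E = m" and m3: "3 \<le> m"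
  shows "\<exists>a b. {a,b} \<in> TE \<and> m div 3 \<le> card (side_leaves N TE a b)
                 \<and> m div 3 \<le> m - card (side_leaves N TE a b)"
proof -
  define t where "t = m div 3"
  have T: "is_tree N TE" and deg: "\<forall>v\<in>N. tdegree TE v \<le> 3"
    and bij: "bij_betw \<tau> (tleaves N TE) E" using D unfolding is_decomp_def by auto
  let ?L = "tleaves N TE"
  have finN: "finite N" using tree_fin[OF T] .
  have LN: "?L \<subseteq> N" unfolding tleaves_def by auto
  have cL: "card ?L = m" using bij_betw_same_card[OF bij] m by simp
  let ?sl = "side_leaves N TE"
  have slL: "?sl a b \<subseteq> ?L" for a b unfolding side_leaves_def by auto
  have finsl: "finite (?sl a b)" for a b using slL LN finN finite_subset by metis
  have TEne: "TE \<noteq> {}"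
  proof
    assume e: "TE = {}"
    have "N \<noteq> {}" using T unfolding is_tree_def by blast
    then obtain a where a: "a \<in> N" by blast
    have "\<forall>b\<in>N. b = a" using T a e tc_empty unfolding is_tree_def by metis
    then have "N \<subseteq> {a}" by auto
    then have "card N \<le> 1" using card_mono[of "{a}" N] by simp
    moreover have "card ?L \<le> card N" using card_mono[OF finN LN] .
    ultimately show False using cL m3 by simp
  qed
  then obtain e where "e \<in> TE" by blast
  then obtain a b where ab: "{a,b} \<in> TE" using tree_edge_card[OF T] card_2_iff by metis
  have "?L \<subseteq> ?sl a b \<union> ?sl b a"
  proof
    fix l assume l: "l \<in> ?L"
    then have "l \<in> N" using LN by auto
    then have "tconnected_in (TE - {{a,b}}) a l \<or> tconnected_in (TE - {{a,b}}) b l"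
      using cover[OF T ab] by blast
    then show "l \<in> ?sl a b \<union> ?sl b a" using l unfolding side_leaves_def
      by (auto simp: insert_commute)
  qed
  then have "m \<le> card (?sl a b \<union> ?sl b a)" using cL card_mono finsl by (metis finite_Un)
  also have "\<dots> \<le> card (?sl a b) + card (?sl b a)" by (rule card_Un_le)
  finally have "t \<le> card (?sl a b) \<or> t \<le> card (?sl b a)" unfolding t_def by linarith
  then have ex: "\<exists>p. {fst p, snd p} \<in> TE \<and> t \<le> card (?sl (fst p) (snd p))"
    using ab by (metis fst_conv snd_conv insert_commute)
  obtain p where p: "{fst p, snd p} \<in> TE \<and> t \<le> card (?sl (fst p) (snd p))"
    and pmin: "\<forall>q. {fst q, snd q} \<in> TE \<and> t \<le> card (?sl (fst q) (snd q)) \<longrightarrow>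
         card (sd N TE (fst p) (snd p)) \<le> card (sd N TE (fst q) (snd q))"
    using ex_has_least_nat[where P="\<lambda>q. {fst q, snd q} \<in> TE \<and> t \<le> card (?sl (fst q) (snd q))"
       and m="\<lambda>p. card (sd N TE (fst p) (snd p))", OF ex[THEN someI_ex]]
    by blast
  obtain x y where pxy: "p = (x,y)" by (cases p)
  have xy: "{x,y} \<in> TE" and tx: "t \<le> card (?sl x y)" using p pxy by auto
  have xN: "x \<in> N" using tree_edge_card[OF T xy] by auto
  show ?thesis
  proof (cases "t \<le> m - card (?sl x y)")
    case True then show ?thesis using xy tx t_def by blast
  next
    case False
    then have big: "card (?sl x y) > m - t" unfolding t_def by arith
    let ?C = "{c. {x,c} \<in> TE \<and> c \<noteq> y}"
    have cC: "card ?C \<le> 2" using nbr_card[OF T _ xy] deg xN by blast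
    have finC: "finite ?C"
    proof -
      have "?C \<subseteq> N" using tree_edge_card[OF T] by auto
      then show ?thesis using finN finite_subset by blast
    qed
    have slsub: "?sl x y \<subseteq> {x} \<union> (\<Union>c\<in>?C. ?sl c x)"
    proof
      fix l assume l: "l \<in> ?sl x y"
      then have "tconnected_in (TE - {{x,y}}) x l" "l \<in> ?L" unfolding side_leaves_def by auto
      then show "l \<in> {x} \<union> (\<Union>c\<in>?C. ?sl c x)"
        using side_cover[OF T xy] unfolding side_leaves_def by blast
    qed
    have "?C \<noteq> {}"
    proof
      assume "?C = {}"
      then have "?sl x y \<subseteq> {x}" using slsub by auto
      then have "card (?sl x y) \<le> 1" using card_mono[of "{x}"] by fastforce
      then show False using big m3 unfolding t_def by linarith
    qed
    define M where "M = Max ((\<lambda>c. card (?sl c x)) ` ?C)"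
    have "M \<in> (\<lambda>c. card (?sl c x)) ` ?C" unfolding M_def using finC \<open>?C \<noteq> {}\<close> by simp
    then obtain c where c: "c \<in> ?C" and cM: "card (?sl c x) = M" by auto
    have Mge: "card (?sl c' x) \<le> M" if "c' \<in> ?C" for c'
      unfolding M_def using finC that by simp
    have "card (?sl x y) \<le> card ({x} \<union> (\<Union>c\<in>?C. ?sl c x))"
      using card_mono[OF _ slsub] finC finsl by blast
    also have "\<dots> \<le> card {x} + card (\<Union>c\<in>?C. ?sl c x)" by (rule card_Un_le)
    also have "\<dots> \<le> 1 + (\<Sum>c\<in>?C. card (?sl c x))" using card_UN_le[OF finC] by simp
    also have "\<dots> \<le> 1 + card ?C * M" using sum_bounded_above[of ?C "\<lambda>c. card (?sl c x)" M] Mge by simp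
    also have "\<dots> \<le> 1 + 2 * M" using cC by (simp add: mult_right_mono)
    finally have "t \<le> M" using big unfolding t_def by linarith
    have cx: "{c,x} \<in> TE" using c by (simp add: insert_commute)
    have "card (sd N TE (fst p) (snd p)) \<le> card (sd N TE c x)"
      using pmin[rule_format, of "(c,x)"] cx \<open>t \<le> M\<close> cM by simp
    moreover have "sd N TE c x \<subset> sd N TE x y"
    proof
      show "sd N TE c x \<subseteq> sd N TE x y"
        unfolding sd_def using incl[OF T xy _ _] c by blast
      have "x \<in> sd N TE x y" unfolding sd_def using xN tc_refl by blast
      moreover have "x \<notin> sd N TE c x" unfolding sd_def using tree_acyc[OF T cx] by blast
      ultimately show "sd N TE c x \<noteq> sd N TE x y" by blast
    qed
    then have "card (sd N TE c x) < card (sd N TE x y)"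
      by (rule psubset_card_mono[rotated]) (use finN in \<open>simp add: sd_def\<close>)
    ultimately show ?thesis using pxy by simp
  qed
qed

definition cat_TE :: "nat \<Rightarrow> nat set set" where
  "cat_TE m = {t. (\<exists>i<m. t = {i, m+i}) \<or> (\<exists>i. i+1 < m \<and> t = {m+i, m+i+1})}"

lemma tc_trans: "tconnected_in E a b \<Longrightarrow> tconnected_in E b c \<Longrightarrow> tconnected_in E a c"
  unfolding tconnected_in_def by (rule rtranclp_trans)

lemma tc_cut:
  assumes "\<And>u v. {u,v} \<in> E \<Longrightarrow> (P u \<longleftrightarrow> P v)" and "tconnected_in E a b"
  shows "P a \<longleftrightarrow> P b"
  using assms(2)
  by (induction rule: tc_induct) (use assms(1) in blast)+

lemma cat_spine: "i < m \<Longrightarrow> tconnected_in (cat_TE m) m (m+i)"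
proof (induction i)
  case 0 then show ?case by (simp add: tc_refl)
next
  case (Suc i)
  then have "{m+i, m+Suc i} \<in> cat_TE m" unfolding cat_TE_def by auto
  then show ?case using Suc tc_step by simp
qed

lemma cat_conn:
  assumes "v < 2*m"
  shows "tconnected_in (cat_TE m) m v"
proof (cases "v < m")
  case True
  then have "tconnected_in (cat_TE m) m (m+v)" by (rule cat_spine)
  moreover have "{m+v, v} \<in> cat_TE m" using True unfolding cat_TE_def by (auto simp: insert_commute)
  ultimately show ?thesis by (rule tc_step)
next
  case False
  then have "v - m < m" "v = m + (v - m)" using assms by auto
  then show ?thesis using cat_spine by metis
qed

lemma cat_edge_cases:
  assumes "{u,v} \<in> cat_TE m"
  obtains (leaf) j where "j < m" "(u = j \<and> v = m+j) \<or> (u = m+j \<and> v = j)"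
    | (sp) j where "j+1 < m" "(u = m+j \<and> v = m+j+1) \<or> (u = m+j+1 \<and> v = m+j)"
proof -
  from assms have "(\<exists>i<m. {u,v} = {i, m+i}) \<or> (\<exists>i. i+1 < m \<and> {u,v} = {m+i, m+i+1})"
    unfolding cat_TE_def by simp
  then show ?thesis
  proof (elim disjE exE conjE)
    fix i assume "i < m" "{u,v} = {i, m+i}"
    then show ?thesis using leaf unfolding doubleton_eq_iff by blast
  next
    fix i assume "i+1 < m" "{u,v} = {m+i, m+i+1}"
    then show ?thesis using sp unfolding doubleton_eq_iff by blast
  qed
qed

lemma cat_acyc:
  assumes m: "2 \<le> m" and e: "{a,b} \<in> cat_TE m"
  shows "\<not> tconnected_in (cat_TE m - {{a,b}}) a b"
proof
  assume c: "tconnected_in (cat_TE m - {{a,b}}) a b"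
  from e show False
  proof (cases rule: cat_edge_cases)
    case (leaf i)
    have "(a = i) \<longleftrightarrow> (b = i)"
    proof (rule tc_cut[OF _ c])
      fix u v assume uv: "{u,v} \<in> cat_TE m - {{a,b}}"
      then have uv1: "{u,v} \<in> cat_TE m" and uv2: "{u,v} \<noteq> {a,b}" by auto
      from uv1 show "(u = i) \<longleftrightarrow> (v = i)"
      proof (cases rule: cat_edge_cases)
        case (leaf j)
        have "j \<noteq> i"
        proof
          assume "j = i"
          then have "{u,v} = {a,b}" using leaf \<open>(a = i \<and> b = m+i) \<or> (a = m+i \<and> b = i)\<close>
            by (auto simp: insert_commute)
          then show False using uv2 by simp
        qed
        then show ?thesis using leaf \<open>i < m\<close> by auto
      next
        case (sp j)
        then show ?thesis using \<open>i < m\<close> by auto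
      qed
    qed
    then show False using leaf m by auto
  next
    case (sp i)
    let ?P = "\<lambda>v. v \<le> i \<or> (m \<le> v \<and> v \<le> m+i)"
    have "?P a \<longleftrightarrow> ?P b"
    proof (rule tc_cut[OF _ c])
      fix u v assume uv: "{u,v} \<in> cat_TE m - {{a,b}}"
      then have uv1: "{u,v} \<in> cat_TE m" and uv2: "{u,v} \<noteq> {a,b}" by auto
      from uv1 show "?P u \<longleftrightarrow> ?P v"
      proof (cases rule: cat_edge_cases)
        case (leaf j)
        then show ?thesis by auto
      next
        case (sp j)
        have "j \<noteq> i"
        proof
          assume "j = i"
          then have "{u,v} = {a,b}" using sp \<open>(a = m+i \<and> b = m+i+1) \<or> (a = m+i+1 \<and> b = m+i)\<close>
            by (auto simp: insert_commute)
          then show False using uv2 by simp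
        qed
        then show ?thesis using sp by auto
      qed
    qed
    then show False using sp m by auto
  qed
qed

lemma cat_mem:
  assumes "t \<in> cat_TE m"
  obtains (leaf) j where "j < m" "t = {j, m+j}" | (sp) j where "j+1 < m" "t = {m+j, m+j+1}"
  using assms unfolding cat_TE_def by blast

lemma cat_inc_leaf: "v < m \<Longrightarrow> {t \<in> cat_TE m. v \<in> t} = {{v, m+v}}"
proof (rule set_eqI, rule iffI)
  fix t assume v: "v < m" and t: "t \<in> {t \<in> cat_TE m. v \<in> t}"
  then have t1: "t \<in> cat_TE m" and vt: "v \<in> t" by auto
  from t1 show "t \<in> {{v, m+v}}"
  proof (cases rule: cat_mem)
    case (leaf j)
    then have "v = j" using vt v by auto
    then show ?thesis using leaf by simp
  next
    case (sp j)
    then show ?thesis using vt v by auto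
  qed
next
  fix t assume v: "v < m" and "t \<in> {{v, m+v}}"
  then have "t = {v, m+v}" by simp
  then show "t \<in> {t \<in> cat_TE m. v \<in> t}" using v unfolding cat_TE_def by blast
qed

lemma cat_inc_spine:
  assumes i: "i < m"
  shows "{t \<in> cat_TE m. m+i \<in> t} \<subseteq> {{i,m+i}, {m+i-1, m+i}, {m+i, m+i+1}}"
proof
  fix t assume "t \<in> {t \<in> cat_TE m. m+i \<in> t}"
  then have t1: "t \<in> cat_TE m" and vt: "m+i \<in> t" by auto
  from t1 show "t \<in> {{i,m+i}, {m+i-1, m+i}, {m+i, m+i+1}}"
  proof (cases rule: cat_mem)
    case (leaf j)
    then have "m+i = m+j" using vt by auto
    then show ?thesis using leaf by simp
  next
    case (sp j)
    then have "m+i = m+j \<or> m+i = m+j+1" using vt by auto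
    then show ?thesis
    proof
      assume "m+i = m+j" then show ?thesis using sp by simp
    next
      assume "m+i = m+j+1"
      then have e1: "m+i-1 = m+j" and e2: "m+i = m+j+1" by auto
      have "t = {m+i-1, m+i}" using sp(2) by (simp only: e1 e2[symmetric])
      then show ?thesis by simp
    qed
  qed
qed

lemma cat_is_decomp:
  assumes m: "2 \<le> m"
  shows "is_decomp {0..<m} {0..<2*m} (cat_TE m) id"
proof -
  let ?N = "{0..<2*m}" and ?T = "cat_TE m"
  have edges: "\<forall>t\<in>?T. card t = 2 \<and> t \<subseteq> ?N" using m unfolding cat_TE_def by auto
  have conn: "\<forall>a\<in>?N. \<forall>b\<in>?N. tconnected_in ?T a b"
    using cat_conn tc_sym tc_trans by (metis atLeastLessThan_iff)
  have acyc: "\<forall>a b. {a, b} \<in> ?T \<longrightarrow> \<not> tconnected_in (?T - {{a, b}}) a b"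
    using cat_acyc[OF m] by blast
  have tree: "is_tree ?N ?T" unfolding is_tree_def using edges conn acyc m by auto
  have degl: "tdegree ?T v = 1" if "v < m" for v
    unfolding tdegree_def cat_inc_leaf[OF that] by simp
  have degs: "2 \<le> tdegree ?T (m+i) \<and> tdegree ?T (m+i) \<le> 3" if i: "i < m" for i
  proof
    have fin: "finite {{i,m+i}, {m+i-1, m+i}, {m+i, m+i+1}}" by simp
    have "tdegree ?T (m+i) \<le> card {{i,m+i}, {m+i-1, m+i}, {m+i, m+i+1}}"
      unfolding tdegree_def by (rule card_mono[OF fin cat_inc_spine[OF i]])
    also have "\<dots> \<le> 3" by (simp add: card_insert_le_m1)
    finally show "tdegree ?T (m+i) \<le> 3" .
    have fin2: "finite {t \<in> cat_TE m. m+i \<in> t}"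
      using cat_inc_spine[OF i] fin finite_subset by blast
    have l1: "{i, m+i} \<in> ?T" using i unfolding cat_TE_def by blast
    obtain e2 where e2: "e2 \<in> ?T" "m+i \<in> e2" "e2 \<noteq> {i, m+i}"
    proof (cases "i+1 < m")
      case True
      have "{m+i, m+i+1} \<in> ?T" using True unfolding cat_TE_def by blast
      moreover have "{m+i, m+i+1} \<noteq> {i, m+i}"
      proof
        assume "{m+i, m+i+1} = {i, m+i}"
        then have "m+i+1 \<in> {i, m+i}" by (metis insertI1 insert_commute)
        then show False using i by auto
      qed
      ultimately show ?thesis using that by blast
    next
      case False
      then have i1: "i \<ge> 1" using m i by simp
      then have "(i-1)+1 < m" using i by simp
      then have "{m+(i-1), m+(i-1)+1} \<in> ?T" unfolding cat_TE_def by blast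
      moreover have "m+(i-1)+1 = m+i" using i1 by simp
      ultimately have A: "{m+(i-1), m+i} \<in> ?T" by simp
      have B: "{m+(i-1), m+i} \<noteq> {i, m+i}"
      proof
        assume "{m+(i-1), m+i} = {i, m+i}"
        then have "m+(i-1) \<in> {i, m+i}" by (metis insertI1)
        then show False using i i1 by auto
      qed
      show ?thesis using that[OF A _ B] by simp
    qed
    have "{{i, m+i}, e2} \<subseteq> {t \<in> cat_TE m. m+i \<in> t}" using e2 l1 by simp
    then have "card {{i, m+i}, e2} \<le> tdegree ?T (m+i)" unfolding tdegree_def
      by (rule card_mono[OF fin2])
    moreover have "card {{i, m+i}, e2} = 2" using e2(3) by simp
    ultimately show "2 \<le> tdegree ?T (m+i)" by simp
  qed
  have deg: "\<forall>v\<in>?N. tdegree ?T v \<le> 3"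
  proof
    fix v assume "v \<in> ?N"
    show "tdegree ?T v \<le> 3"
    proof (cases "v < m")
      case True then show ?thesis using degl by simp
    next
      case False
      then have "v = m + (v - m)" "v - m < m" using \<open>v \<in> ?N\<close> by auto
      then show ?thesis using degs by metis
    qed
  qed
  have leaves: "tleaves ?N ?T = {0..<m}"
  proof (rule set_eqI)
    fix v
    show "v \<in> tleaves ?N ?T \<longleftrightarrow> v \<in> {0..<m}"
    proof (cases "v < m")
      case True then show ?thesis unfolding tleaves_def using degl by simp
    next
      case False
      show ?thesis
      proof (cases "v < 2*m")
        case True
        then have "v = m + (v - m)" "v - m < m" using False by auto
        then have "2 \<le> tdegree ?T v" using degs by metis
        then show ?thesis unfolding tleaves_def using False by simp
      qed (use False in \<open>simp add: tleaves_def\<close>)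
    qed
  qed
  show ?thesis unfolding is_decomp_def using tree deg leaves by simp
qed

definition Kd :: "nat \<Rightarrow> (nat, nat) pre_digraph" where
  "Kd n = \<lparr> verts = {0..<2*n}, arcs = {0..<n*n}, tail = (\<lambda>e. e div n), head = (\<lambda>e. n + e mod n) \<rparr>"

lemma Kd_fin: "0 < n \<Longrightarrow> fin_digraph (Kd n)"
proof (unfold_locales)
  fix e assume n: "0 < n" and e: "e \<in> arcs (Kd n)"
  then have "e < n*n" by (simp add: Kd_def)
  then have "e div n < n" by (rule less_mult_imp_div_less)
  then show "tail (Kd n) e \<in> verts (Kd n)" by (simp add: Kd_def)
  show "head (Kd n) e \<in> verts (Kd n)" using n by (simp add: Kd_def)
qed (simp_all add: Kd_def)

lemma width_zero:
  assumes "\<And>X. X \<subseteq> E \<Longrightarrow> ord X = 0"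
  shows "min_width E ord = 0"
proof -
  have w: "decomp_width ord N TE \<tau> = 0" if D: "is_decomp E N TE \<tau>" for N TE \<tau>
  proof -
    have sub: "\<tau> ` side_leaves N TE a b \<subseteq> E" for a b
      using D unfolding is_decomp_def side_leaves_def bij_betw_def by auto
    have eq: "{0} \<union> {ord (\<tau> ` side_leaves N TE a b) | a b. {a, b} \<in> TE} = {0::nat}"
      using assms sub by auto
    have "Max ({0} \<union> {ord (\<tau> ` side_leaves N TE a b) | a b. {a, b} \<in> TE}) = 0"
      by (simp only: eq Max_singleton)
    then show ?thesis unfolding decomp_width_def .
  qed
  have "(LEAST k. \<exists>N TE \<tau>. is_decomp E N TE \<tau> \<and> decomp_width ord N TE \<tau> = k) = 0"
    if "\<exists>N TE \<tau>. is_decomp E N TE \<tau>"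
    by (rule Least_eq_0) (use w that in blast)
  then show ?thesis unfolding min_width_def by simp
qed

lemma Kd_dbw: "dbw (Kd n) = 0"
proof -
  have "SV (Kd n) X = {}" if "X \<subseteq> arcs (Kd n)" for X
  proof -
    have dv: "e div n < n" if "e \<in> arcs (Kd n)" for e
      using that by (simp add: Kd_def less_mult_imp_div_less)
    show ?thesis
    proof (rule equals0I)
      fix y assume "y \<in> SV (Kd n) X"
      then obtain e e' where "e \<in> arcs (Kd n) - X" "head (Kd n) e = y" "e' \<in> X" "tail (Kd n) e' = y"
        unfolding SV_def by blast
      moreover have "e' div n < n" using dv[of e'] calculation that by blast
      ultimately show False by (simp add: Kd_def)
    qed
  qed
  then have "fD (Kd n) X = 0" if "X \<subseteq> arcs (Kd n)" for X
    unfolding fD_def using that by auto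
  then show ?thesis unfolding dbw_def by (rule width_zero)
qed

lemma Kd_mid:
  assumes n: "0 < n" and X: "X \<subseteq> {0..<n*n}"
  shows "card X \<le> 2*n*mid_order (underlying (Kd n)) X \<or>
         card ({0..<n*n} - X) \<le> 2*n*mid_order (underlying (Kd n)) X"
proof (rule ccontr)
  let ?E = "{0..<n*n}"
  let ?en = "\<lambda>e::nat. {e div n, n + e mod n}"
  define S where "S = {v. (\<exists>e\<in>X. v \<in> ?en e) \<and> (\<exists>e\<in>?E - X. v \<in> ?en e)}"
  have mo: "mid_order (underlying (Kd n)) X = card S"
    unfolding mid_order_def S_def underlying_def Kd_def by simp
  have Sfin: "finite S"
  proof -
    have "S \<subseteq> {0..<2*n}"
    proof
      fix v assume "v \<in> S"
      then obtain e where e: "e \<in> X" "v \<in> ?en e" unfolding S_def by blast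
      then have "e < n*n" using X by auto
      then have "e div n < n" by (rule less_mult_imp_div_less)
      then show "v \<in> {0..<2*n}" using e n by auto
    qed
    then show ?thesis using finite_subset by blast
  qed
  define A where "A = (\<lambda>(v,j). v*n+j) ` (S \<times> {0..<n})"
  define B where "B = (\<lambda>(v,i). i*n + (v-n)) ` (S \<times> {0..<n})"
  have cA: "card A \<le> card S * n" unfolding A_def
    using card_image_le[of "S \<times> {0..<n}"] Sfin by (simp add: card_cartesian_product)
  have cB: "card B \<le> card S * n" unfolding B_def
    using card_image_le[of "S \<times> {0..<n}"] Sfin by (simp add: card_cartesian_product)
  have cAB: "card (A \<union> B) \<le> 2*n*card S"
    using card_Un_le[of A B] cA cB by (simp add: algebra_simps)
  have good: "\<exists>e\<in>Y. e div n \<notin> S \<and> n + e mod n \<notin> S" if Y: "Y \<subseteq> ?E" and cY: "\<not> card Y \<le> 2*n*card S" for Y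
  proof (rule ccontr)
    assume h: "\<not> (\<exists>e\<in>Y. e div n \<notin> S \<and> n + e mod n \<notin> S)"
    have "Y \<subseteq> A \<union> B"
    proof
      fix e assume eY: "e \<in> Y"
      then have e: "e < n*n" using Y by auto
      have ed: "e = (e div n)*n + e mod n" by simp
      have "e div n \<in> S \<or> n + e mod n \<in> S" using h eY by blast
      then show "e \<in> A \<union> B"
      proof
        assume "e div n \<in> S"
        then have "(e div n, e mod n) \<in> S \<times> {0..<n}" using n by simp
        then have "(\<lambda>(v,j). v*n+j) (e div n, e mod n) \<in> A" unfolding A_def by (rule imageI)
        then show ?thesis using ed by simp
      next
        assume "n + e mod n \<in> S"
        moreover have "e div n < n" using e by (rule less_mult_imp_div_less)
        ultimately have "(n + e mod n, e div n) \<in> S \<times> {0..<n}" by simp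
        then have "(\<lambda>(v,i). i*n + (v-n)) (n + e mod n, e div n) \<in> B" unfolding B_def by (rule imageI)
        then show ?thesis using ed by simp
      qed
    qed
    moreover have "finite (A \<union> B)" unfolding A_def B_def using Sfin by simp
    ultimately have "card Y \<le> card (A \<union> B)" by (rule card_mono[rotated])
    then show False using cY cAB by simp
  qed
  assume "\<not> ?thesis"
  then have c1: "\<not> card X \<le> 2*n*card S" and c2: "\<not> card (?E - X) \<le> 2*n*card S"
    unfolding mo by auto
  obtain e1 where e1: "e1 \<in> X" "e1 div n \<notin> S" "n + e1 mod n \<notin> S" using good[OF X c1] by blast
  obtain e2 where e2: "e2 \<in> ?E - X" "e2 div n \<notin> S" "n + e2 mod n \<notin> S" using good[OF _ c2] by blast
  define e3 where "e3 = (e1 div n)*n + e2 mod n"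
  have "e1 < n*n" using e1 X by auto
  then have q: "e1 div n < n" by (rule less_mult_imp_div_less)
  have r: "e2 mod n < n" using n by simp
  have e3d: "e3 div n = e1 div n" and e3m: "e3 mod n = e2 mod n" unfolding e3_def using n r by auto
  have "e3 < n*n"
  proof -
    have "e3 < (e1 div n)*n + n" unfolding e3_def using r by simp
    also have "\<dots> = (e1 div n + 1)*n" by simp
    also have "\<dots> \<le> n*n" using mult_le_mono1[OF Suc_leI[OF q], of n] by simp
    finally show ?thesis .
  qed
  then have e3E: "e3 \<in> ?E" by simp
  show False
  proof (cases "e3 \<in> X")
    case True
    have "n + e2 mod n \<in> ?en e3" "n + e2 mod n \<in> ?en e2" using e3m by simp_all
    then have "n + e2 mod n \<in> S" unfolding S_def using True e2(1) by blast
    then show False using e2 by simp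
  next
    case False
    have "e1 div n \<in> ?en e3" "e1 div n \<in> ?en e1" using e3d by simp_all
    moreover have "e3 \<in> ?E - X" using False e3E by simp
    ultimately have "e1 div n \<in> S" unfolding S_def using e1(1) by blast
    then show False using e1 by simp
  qed
qed

lemma width_ge:
  assumes D: "is_decomp E N TE \<tau>" and ab: "{a,b} \<in> TE"
  shows "ord (\<tau> ` side_leaves N TE a b) \<le> decomp_width ord N TE \<tau>"
proof -
  have T: "is_tree N TE" using D unfolding is_decomp_def by simp
  have "{ord (\<tau> ` side_leaves N TE a b) | a b. {a, b} \<in> TE}
      \<subseteq> (\<lambda>(a,b). ord (\<tau> ` side_leaves N TE a b)) ` (N \<times> N)"
  proof
    fix x assume "x \<in> {ord (\<tau> ` side_leaves N TE a b) | a b. {a, b} \<in> TE}"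
    then obtain a b where "x = ord (\<tau> ` side_leaves N TE a b)" "{a,b} \<in> TE" by blast
    moreover have "a \<in> N" "b \<in> N" using tree_edge_card[OF T calculation(2)] by auto
    ultimately show "x \<in> (\<lambda>(a,b). ord (\<tau> ` side_leaves N TE a b)) ` (N \<times> N)" by force
  qed
  moreover have "finite ((\<lambda>(a,b). ord (\<tau> ` side_leaves N TE a b)) ` (N \<times> N))"
    using tree_fin[OF T] by simp
  ultimately have fin: "finite ({0} \<union> {ord (\<tau> ` side_leaves N TE a b) | a b. {a, b} \<in> TE})"
    using finite_subset by blast
  have "ord (\<tau> ` side_leaves N TE a b) \<in> {0} \<union> {ord (\<tau> ` side_leaves N TE a b) | a b. {a, b} \<in> TE}"
    using ab by blast
  then show ?thesis unfolding decomp_width_def using Max_ge[OF fin] by blast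
qed

theorem mainTheorem7:
  shows "\<not> (\<exists>f :: nat \<Rightarrow> nat. \<forall>D :: (nat, nat) pre_digraph.
            fin_digraph D \<longrightarrow> bw (underlying D) \<le> f (dbw D))"
proof
  assume "\<exists>f :: nat \<Rightarrow> nat. \<forall>D :: (nat, nat) pre_digraph.
            fin_digraph D \<longrightarrow> bw (underlying D) \<le> f (dbw D)"
  then obtain f :: "nat \<Rightarrow> nat" where hf: "\<And>D :: (nat, nat) pre_digraph.
            fin_digraph D \<Longrightarrow> bw (underlying D) \<le> f (dbw D)" by blast
  define c where "c = f 0"
  define n where "n = 6*(c+1)"
  define m where "m = n*n"
  let ?G = "underlying (Kd n)"
  let ?E = "{0..<m}"
  have n0: "0 < n" unfolding n_def by simp
  have m3: "3 \<le> m" unfolding m_def n_def by (simp add: algebra_simps)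
  have bwle: "bw ?G \<le> c" using hf[OF Kd_fin[OF n0]] Kd_dbw c_def by simp
  have bwdef: "bw ?G = min_width ?E (mid_order ?G)"
    unfolding bw_def m_def by (simp add: underlying_def Kd_def)
  have ex: "\<exists>N TE \<tau>. is_decomp ?E N TE \<tau>" using cat_is_decomp[of m] m3 by auto
  then have "bw ?G = (LEAST k. \<exists>N TE \<tau>. is_decomp ?E N TE \<tau> \<and> decomp_width (mid_order ?G) N TE \<tau> = k)"
    unfolding bwdef min_width_def by simp
  moreover have "\<exists>k N TE \<tau>. is_decomp ?E N TE \<tau> \<and> decomp_width (mid_order ?G) N TE \<tau> = k"
    using ex by blast
  ultimately obtain N TE \<tau> where D: "is_decomp ?E N TE \<tau>"
    and wd: "decomp_width (mid_order ?G) N TE \<tau> = bw ?G"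
    using LeastI_ex[of "\<lambda>k. \<exists>N TE \<tau>. is_decomp ?E N TE \<tau> \<and> decomp_width (mid_order ?G) N TE \<tau> = k"]
    by metis
  obtain a b where ab: "{a,b} \<in> TE" and t1: "m div 3 \<le> card (side_leaves N TE a b)"
    and t2: "m div 3 \<le> m - card (side_leaves N TE a b)"
    using balanced[OF D _ _ m3] by auto
  define X where "X = \<tau> ` side_leaves N TE a b"
  have bij: "bij_betw \<tau> (tleaves N TE) ?E" using D unfolding is_decomp_def by simp
  have slL: "side_leaves N TE a b \<subseteq> tleaves N TE" unfolding side_leaves_def by auto
  have XE: "X \<subseteq> ?E" unfolding X_def using bij slL unfolding bij_betw_def by auto
  have cX: "card X = card (side_leaves N TE a b)" unfolding X_def
    using bij slL unfolding bij_betw_def by (meson card_image inj_on_subset)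
  have cEX: "card (?E - X) = m - card X" using XE by (simp add: card_Diff_subset finite_subset)
  define k where "k = mid_order ?G X"
  have XE': "X \<subseteq> {0..<n*n}" using XE unfolding m_def .
  have "card X \<le> 2*n*k \<or> card ({0..<n*n} - X) \<le> 2*n*k"
    using Kd_mid[OF n0 XE'] unfolding k_def .
  then have "m div 3 \<le> 2*n*k" using t1 t2 cX cEX unfolding m_def by auto
  moreover have "m div 3 = 12*(c+1)*(c+1)" unfolding m_def n_def by (simp add: algebra_simps)
  moreover have "2*n*k = 12*(c+1)*k" unfolding n_def by simp
  ultimately have "12*(c+1)*(c+1) \<le> 12*(c+1)*k" by simp
  then have "c+1 \<le> k" by (subst (asm) mult_le_cancel1) simp
  moreover have "k \<le> bw ?G" using width_ge[OF D ab, of "mid_order ?G"] wd unfolding k_def X_def by simp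
  ultimately show False using bwle by simp
qed

end
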